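(* Let $n\ge 2$ be an integer and $k$ an integer with $0\le k\le n-1$. Then $$e_k\left(\left\{\csc^2\left(\tfrac{j\pi}{2n}\right) : j=1,\dots,n-1\right\}\right) = \frac{4^k\,(n+k)!\,(n-1)!}{(2k+1)!\,(n-k-1)!\,n!}.$$
   Context: $e_k(\alpha_1,\dots,\alpha_m)$ denotes the degree-$k$ elementary symmetric function of $\alpha_1,\dots,\alpha_m$ (with $e_0=1$). *)

theory Defs
  imports Complex_Main
begin

definition elem_sym :: "nat \<Rightarrow> ('i \<Rightarrow> 'a::comm_ring_1) \<Rightarrow> 'i set \<Rightarrow> 'a" where
  "elem_sym k a I = (\<Sum>S\<in>{S. S \<subseteq> I \<and> card S = k}. \<Prod>i\<in>S. a i)"

end

theory Submission imports Defs "HOL-Computational_Algebra.Polynomial" begin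

lemma elem_sym_0: "finite J \<Longrightarrow> elem_sym 0 y J = 1"
proof -
  assume f: "finite J"
  have "{S. S \<subseteq> J \<and> card S = 0} = {{}}" using f by (auto dest: finite_subset)
  thus ?thesis by (simp add: elem_sym_def)
qed

lemma elem_sym_empty_Suc: "elem_sym (Suc k) y {} = 0"
proof -
  have "{S. S \<subseteq> {} \<and> card S = Suc k} = {}" by auto
  thus ?thesis unfolding elem_sym_def by (metis sum.empty)
qed

lemma elem_sym_insert:
  assumes f: "finite J" and a: "a \<notin> J"
  shows "elem_sym (Suc k) y (insert a J) = elem_sym (Suc k) y J + y a * elem_sym k y J"
proof -
  let ?A = "{S. S \<subseteq> J \<and> card S = Suc k}"
  let ?B = "{S. S \<subseteq> J \<and> card S = k}"
  have eq: "{S. S \<subseteq> insert a J \<and> card S = Suc k} = ?A \<union> insert a ` ?B"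
  proof (intro set_eqI iffI)
    fix S assume S: "S \<in> {S. S \<subseteq> insert a J \<and> card S = Suc k}"
    show "S \<in> ?A \<union> insert a ` ?B"
    proof (cases "a \<in> S")
      case True
      have fS: "finite S" using S f by (auto intro: finite_subset)
      have "S = insert a (S - {a})" using True by auto
      moreover have "S - {a} \<in> ?B" using S fS True by auto
      ultimately show ?thesis by blast
    next
      case False thus ?thesis using S by auto
    qed
  next
    fix S assume "S \<in> ?A \<union> insert a ` ?B"
    then show "S \<in> {S. S \<subseteq> insert a J \<and> card S = Suc k}"
    proof
      assume "S \<in> ?A" thus ?thesis by auto
    next
      assume "S \<in> insert a ` ?B"
      then obtain T where T: "T \<in> ?B" "S = insert a T" by auto
      have "finite T" using T f by (auto intro: finite_subset)
      moreover have "a \<notin> T" using T a by auto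
      ultimately show ?thesis using T by auto
    qed
  qed
  have fA: "finite ?A" using f by simp
  have fB: "finite (insert a ` ?B)" using f by simp
  have disj: "?A \<inter> insert a ` ?B = {}" using a by auto
  have inj: "inj_on (insert a) ?B"
    unfolding inj_on_def using a by (metis (mono_tags, lifting) insert_ident mem_Collect_eq subsetD)
  have "elem_sym (Suc k) y (insert a J) = (\<Sum>S\<in>?A. prod y S) + (\<Sum>S\<in>insert a ` ?B. prod y S)"
    unfolding elem_sym_def eq by (rule sum.union_disjoint[OF fA fB disj])
  also have "(\<Sum>S\<in>insert a ` ?B. prod y S) = (\<Sum>T\<in>?B. prod y (insert a T))"
    by (rule sum.reindex[OF inj, unfolded comp_def])
  also have "\<dots> = (\<Sum>T\<in>?B. y a * prod y T)"
  proof (rule sum.cong[OF refl])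
    fix T assume T: "T \<in> ?B"
    have "finite T" using T f by (auto intro: finite_subset)
    moreover have "a \<notin> T" using T a by auto
    ultimately show "prod y (insert a T) = y a * prod y T" by simp
  qed
  finally show ?thesis by (simp add: elem_sym_def sum_distrib_left)
qed

lemma coeff_lin_mult: "coeff ([:1, a:] * p) k = coeff p k + (if k = 0 then 0 else a * coeff (p::'a::comm_ring_1 poly) (k - 1))"
  by (cases k) (simp_all add: coeff_pCons)
lemma gen_fun:
  fixes y :: "'i \<Rightarrow> 'a::comm_ring_1"
  assumes "finite J"
  shows "coeff (\<Prod>j\<in>J. [:1, y j:]) k = elem_sym k y J"
  using assms
proof (induction J arbitrary: k rule: finite_induct)
  case empty
  then show ?case by (cases k) (simp_all add: elem_sym_0 elem_sym_empty_Suc)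
next
  case (insert a J)
  show ?case
  proof (cases k)
    case 0 thus ?thesis using insert by (simp add: coeff_lin_mult elem_sym_0)
  next
    case (Suc m) thus ?thesis using insert by (simp add: coeff_lin_mult elem_sym_insert)
  qed
qed


fun Q :: "nat \<Rightarrow> real poly" where
  "Q 0 = 0"
| "Q (Suc 0) = 1"
| "Q (Suc (Suc n)) = smult 2 ([:1, -2:] * Q (Suc n)) - Q n"

lemma binom_rec: "(n + m + 3 choose (2*m+3)) + (n + m + 1 choose (2*m+3))
   = 2 * (n + m + 2 choose (2*m+3)) + (n + m + 1 choose (2*m+1))"
proof -
  define N where "N = n + m + 1"
  have a: "n + m + 3 = Suc (Suc N)" "n + m + 2 = Suc N" "n + m + 1 = N" by (simp_all add: N_def)
  have b: "2*m+3 = Suc (Suc (Suc (2*m)))" "2*m+1 = Suc (2*m)" by simp_all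
  show ?thesis unfolding a b by (simp add: binomial_Suc_Suc)
qed

lemma coeff_Q: "coeff (Q n) k = (-4) ^ k * real (n + k choose (2*k+1))"
proof (induction n arbitrary: k rule: Q.induct)
  case 1 then show ?case by simp
next
  case 2 then show ?case by (cases k) (simp_all add: binomial_eq_0)
next
  case (3 n)
  have e: "coeff ([:1, -2:] * p) k = coeff p k + (if k = 0 then 0 else -2 * coeff p (k - 1))" for p :: "real poly"
    using coeff_lin_mult[of "-2" p k] by simp
  show ?case
  proof (cases k)
    case 0 thus ?thesis using 3 by (simp add: e)
  next
    case (Suc m)
    have r: "real (n + m + 3 choose (2*m+3)) = 2 * real (n + m + 2 choose (2*m+3)) + real (n + m + 1 choose (2*m+1)) - real (n + m + 1 choose (2*m+3))"
      using arg_cong[OF binom_rec[of n m], of real] by simp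
    have i1: "Suc (Suc n) + Suc m = n + m + 3" "Suc n + Suc m = n + m + 2" "n + Suc m = n + m + 1" "Suc n + m = n + m + 1"
        "2 * Suc m + 1 = 2*m+3" by simp_all
    show ?thesis using 3 unfolding Suc by (simp add: e i1 r algebra_simps)
  qed
qed

lemma sin_Q: "sin (2 * real n * t) = sin (2 * t) * poly (Q n) ((sin t)^2)"
proof (induction n rule: Q.induct)
  case 1 then show ?case by simp
next
  case 2 then show ?case by simp
next
  case (3 n)
  have "sin (2 * real (Suc (Suc n)) * t) + sin (2 * real n * t) = 2 * sin (2 * real (Suc n) * t) * cos (2 * t)"
  proof -
    have x: "2 * real (Suc (Suc n)) * t = 2 * real (Suc n) * t + 2 * t" "2 * real n * t = 2 * real (Suc n) * t - 2 * t"
      by (simp_all add: algebra_simps)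
    show ?thesis unfolding x sin_add sin_diff by simp
  qed
  moreover have "cos (2 * t) = 1 - 2 * (sin t)^2" by (rule cos_double_sin)
  ultimately have "sin (2 * real (Suc (Suc n)) * t) = 2 * sin (2 * real (Suc n) * t) * (1 - 2 * (sin t)^2) - sin (2 * real n * t)"
    by simp
  also have "\<dots> = sin (2 * t) * (2 * ((1 - 2 * (sin t)^2) * poly (Q (Suc n)) ((sin t)^2)) - poly (Q n) ((sin t)^2))"
    unfolding 3(1) 3(2) by (simp add: algebra_simps)
  finally show ?case by (simp add: algebra_simps)
qed


theorem mainTheorem9:
  fixes n k :: nat
  assumes "n \<ge> 2" and "k \<le> n - 1"
  shows "elem_sym k (\<lambda>j. 1 / (sin (real j * pi / (2 * real n)))\<^sup>2) {1..n-1}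
         = 4 ^ k * fact (n + k) * fact (n - 1) / (fact (2 * k + 1) * fact (n - k - 1) * fact n)"
proof -
  define th where "th j = real j * pi / (2 * real n)" for j :: nat
  define x where "x j = (sin (th j))^2" for j
  define y where "y j = 1 / (sin (th j))^2" for j
  define J where "J = {1..n-1}"
  define G where "G = (\<Prod>j\<in>J. [:1, y j:])"
  define H where "H = smult (1 / real n) (pcompose (Q n) [:0, -1:])"
  have npos: "real n > 0" using assms by simp
  have th_rng: "0 < th j \<and> th j < pi / 2" if "j \<in> J" for j
    using that npos unfolding th_def J_def by (auto simp: field_simps)
  have xpos: "x j > 0" if "j \<in> J" for j
    using sin_gt_zero2[of "th j"] th_rng[OF that] unfolding x_def by simp
  have xinj: "inj_on x J"
  proof (rule inj_onI)
    fix i j assume i: "i \<in> J" and j: "j \<in> J" and e: "x i = x j"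
    have "sin (th i) = sin (th j)"
      using e xpos[OF i] xpos[OF j] sin_gt_zero2[of "th i"] sin_gt_zero2[of "th j"] th_rng[OF i] th_rng[OF j]
      unfolding x_def by (simp add: power2_eq_iff_nonneg)
    hence "th i = th j"
      using sin_mono_less_eq[of "th i" "th j"] sin_mono_less_eq[of "th j" "th i"] th_rng[OF i] th_rng[OF j]
    proof -
      have r: "- (pi/2) \<le> th i" "th i \<le> pi/2" "- (pi/2) \<le> th j" "th j \<le> pi/2"
        using th_rng[OF i] th_rng[OF j] by linarith+
      show ?thesis
      proof (cases "th i < th j")
        case True thus ?thesis using sin_mono_less_eq[OF r] \<open>sin (th i) = sin (th j)\<close> by simp
      next
        case False
        show ?thesis
        proof (rule ccontr)
          assume "th i \<noteq> th j" hence "th j < th i" using False by simp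
          thus False using sin_mono_less_eq[OF r(3,4,1,2)] \<open>sin (th i) = sin (th j)\<close> by simp
        qed
      qed
    qed
    thus "i = j" using npos unfolding th_def by (simp add: field_simps)
  qed
  have Qroot: "poly (Q n) (x j) = 0" if "j \<in> J" for j
  proof -
    have "sin (2 * real n * th j) = 0" using npos unfolding th_def by simp
    moreover have "sin (2 * th j) \<noteq> 0"
      using sin_gt_zero[of "2 * th j"] th_rng[OF that] by simp
    ultimately show ?thesis using sin_Q[of n "th j"] unfolding x_def by simp
  qed
  have coeffH: "coeff H i = 4 ^ i * real (n + i choose (2*i+1)) / real n" for i
    unfolding H_def by (simp add: coeff_pcompose_linear coeff_Q power_mult_distrib[symmetric])
  have polyH: "poly H t = poly (Q n) (- t) / real n" for t
    unfolding H_def by (simp add: poly_pcompose)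
  have degH: "degree H \<le> n - 1"
    by (rule degree_le) (auto simp: coeffH binomial_eq_0)
  have degG: "degree G \<le> n - 1"
  proof -
    have "degree G \<le> sum (degree \<circ> (\<lambda>j. [:1, y j:])) J"
      unfolding G_def by (rule degree_prod_sum_le) (simp add: J_def)
    also have "\<dots> \<le> of_nat (card J) * 1"
      by (rule sum_bounded_above) simp
    finally show ?thesis by (simp add: J_def)
  qed
  define R where "R = G - H"
  have R0: "R = 0"
  proof (rule ccontr)
    assume nz: "R \<noteq> 0"
    have sub: "insert 0 ((\<lambda>j. - x j) ` J) \<subseteq> {t. poly R t = 0}"
    proof
      fix t assume "t \<in> insert 0 ((\<lambda>j. - x j) ` J)"
      then consider "t = 0" | j where "j \<in> J" "t = - x j" by auto
      then show "t \<in> {t. poly R t = 0}"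
      proof cases
        case 1
        have "poly G 0 = 1" unfolding G_def by (simp add: poly_prod)
        moreover have "poly H 0 = 1" using npos by (simp add: poly_0_coeff_0 coeffH)
        ultimately show ?thesis using 1 by (simp add: R_def)
      next
        case 2
        have "poly G t = (\<Prod>i\<in>J. 1 + t * y i)" unfolding G_def by (simp add: poly_prod)
        also have "\<dots> = 0"
        proof (rule prod_zero)
          show "finite J" by (simp add: J_def)
          show "\<exists>i\<in>J. 1 + t * y i = 0"
            using 2 xpos[OF 2(1)] by (intro bexI[of _ j]) (auto simp: x_def y_def)
        qed
        finally have "poly G t = 0" .
        moreover have "poly H t = 0" using 2 Qroot[OF 2(1)] by (simp add: polyH)
        ultimately show ?thesis by (simp add: R_def)
      qed
    qed
    have "card (insert 0 ((\<lambda>j. - x j) ` J)) = Suc (card J)"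
    proof -
      have "inj_on (\<lambda>j. - x j) J" using xinj by (auto simp: inj_on_def)
      moreover have "0 \<notin> (\<lambda>j. - x j) ` J" using xpos by force
      ultimately show ?thesis by (simp add: J_def card_image)
    qed
    also have "\<dots> = n" using assms by (simp add: J_def)
    finally have "n \<le> card {t. poly R t = 0}"
      using card_mono[OF poly_roots_finite[OF nz] sub] by simp
    also have "\<dots> \<le> degree R" by (rule card_poly_roots_bound[OF nz])
    also have "\<dots> \<le> n - 1" unfolding R_def by (rule degree_diff_le[OF degG degH])
    finally show False using assms by simp
  qed
  have "elem_sym k y J = coeff G k" unfolding G_def by (rule gen_fun[symmetric]) (simp add: J_def)
  also have "\<dots> = coeff H k" using R0 by (simp add: R_def)
  also have "\<dots> = 4 ^ k * real (n + k choose (2*k+1)) / real n" by (rule coeffH)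
  also have "\<dots> = 4 ^ k * fact (n + k) * fact (n - 1) / (fact (2 * k + 1) * fact (n - k - 1) * fact n)"
  proof -
    have "fact (2*k+1) * fact (n + k - (2*k+1)) * (n + k choose (2*k+1)) = (fact (n+k) :: nat)"
      by (rule binomial_fact_lemma) (use assms in simp)
    moreover have "n + k - (2*k+1) = n - k - 1" by simp
    ultimately have "fact (2*k+1) * fact (n - k - 1) * (n + k choose (2*k+1)) = (fact (n+k) :: nat)" by simp
    hence "real (fact (2*k+1) * fact (n - k - 1) * (n + k choose (2*k+1))) = real (fact (n+k))" by simp
    hence b: "fact (2*k+1) * fact (n - k - 1) * real (n + k choose (2*k+1)) = fact (n+k)"
      by (simp only: of_nat_mult of_nat_fact)
    have f: "(fact n :: real) = real n * fact (n - 1)"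
      using assms by (simp add: fact_reduce)
    have alg: "\<And>A B C F::real. A > 0 \<Longrightarrow> B > 0 \<Longrightarrow> F > 0 \<Longrightarrow>
       4 ^ k * C / real n = 4 ^ k * (A * B * C) * F / (A * B * (real n * F))"
      using npos by (simp add: field_simps)
    show ?thesis unfolding f b[symmetric] by (rule alg) simp_all
  qed
  finally show ?thesis unfolding y_def th_def J_def .
qed

end
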